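(* Let $n$ be a non-negative integer and $r,s\in\mathbb{C}\setminus\mathbb{Z}^{-}$ with $s\neq0$ and $r-s\notin\mathbb{Z}^{-}$. Then \[ \begin{aligned} &\sum_{k=0}^{n}\binom{n}{k}\frac{H_{k+s}-H_{n-k+r-s}}{(k+2)(k+s)\binom{n+r}{k+s}}-\sum_{k=0}^{n}\binom{n}{k}\frac{1}{(k+2)(k+s)^2\binom{n+r}{k+s}}\\ &\quad=\sum_{k=0}^{n}\binom{n}{k}\frac{(-1)^k(H_{k+s}-H_{r-s})}{(k+1)(k+2)(k+s)\binom{k+r}{k+s}}-\sum_{k=0}^{n}\binom{n}{k}\frac{(-1)^k}{(k+1)(k+2)(k+s)^2\binom{k+r}{k+s}}. \end{aligned} \]
   Context: $\mathbb{Z}^{-}$ denotes the set of negative integers. For complex $z$ not a negative integer, $H_z=\psi(z+1)+\gamma$ ($\psi$ the digamma function, $\gamma$ Euler's constant). Binomial coefficients with complex entries: $\binom{x}{y}=\frac{\Gamma(x+1)}{\Gamma(y+1)\Gamma(x-y+1)}$. *)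

theory Defs
  imports "HOL-Analysis.Analysis"
begin

definition neg_ints :: "complex set" where
  "neg_ints = {z. \<exists>m::nat. z = - of_nat (Suc m)}"

definition Hc :: "complex \<Rightarrow> complex" where
  "Hc z = Digamma (z + 1) + euler_mascheroni"

definition cbinom :: "complex \<Rightarrow> complex \<Rightarrow> complex" where
  "cbinom x y = Gamma (x + 1) / (Gamma (y + 1) * Gamma (x - y + 1))"

end

theory Submission imports Defs "HOL-Computational_Algebra.Formal_Power_Series" begin

lemma poch_gch: "pochhammer (x::complex) j = (-1)^j * fact j * ((-x) gchoose j)"
  by (simp add: gbinomial_pochhammer)

lemma vand1:
  fixes x a :: complex
  shows "(\<Sum>j=0..m. of_nat (m choose j) * pochhammer x j * pochhammer a (m-j)) = pochhammer (x+a) m"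
proof -
  have "(\<Sum>j=0..m. of_nat (m choose j) * pochhammer x j * pochhammer a (m-j))
      = (\<Sum>j=0..m. fact m * (-1)^m * (((-x) gchoose j) * ((-a) gchoose (m-j))))"
  proof (rule sum.cong[OF refl])
    fix j assume j: "j \<in> {0..m}"
    hence jm: "j \<le> m" by simp
    have e: "(-1::complex)^j * (-1)^(m-j) = (-1)^m" using jm
      by (metis le_add_diff_inverse power_add)
    show "of_nat (m choose j) * pochhammer x j * pochhammer a (m-j) = fact m * (-1)^m * (((-x) gchoose j) * ((-a) gchoose (m-j)))"
      unfolding poch_gch[of x] poch_gch[of a] binomial_fact[OF jm] e[symmetric]
      by (simp add: field_simps)
  qed
  also have "\<dots> = fact m * (-1)^m * ((-x + -a) gchoose m)"
    by (simp add: sum_distrib_left[symmetric] gbinomial_Vandermonde)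
  also have "\<dots> = pochhammer (x+a) m" by (simp add: gbinomial_pochhammer add.commute)
  finally show ?thesis .
qed

lemma vand2:
  fixes x y :: complex
  shows "(\<Sum>j=0..m. of_nat (m choose j) * (-1)^j * pochhammer x j * pochhammer (y + of_nat j) (m-j)) = pochhammer (y-x) m"
proof -
  have "(\<Sum>j=0..m. of_nat (m choose j) * (-1)^j * pochhammer x j * pochhammer (y + of_nat j) (m-j))
      = (\<Sum>j=0..m. fact m * (((-x) gchoose j) * ((y + of_nat m - 1) gchoose (m-j))))"
  proof (rule sum.cong[OF refl])
    fix j assume j: "j \<in> {0..m}"
    hence jm: "j \<le> m" by simp
    have e: "(-1::complex)^j * (-1)^j = 1"
      by (metis power_mult_distrib mult_minus1 power_one minus_minus mult_1)
    have p: "pochhammer (y + of_nat j) (m-j) = fact (m-j) * ((y + of_nat m - 1) gchoose (m-j))"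
      using jm by (simp add: gbinomial_pochhammer' of_nat_diff algebra_simps)
    show "of_nat (m choose j) * (-1)^j * pochhammer x j * pochhammer (y + of_nat j) (m-j) = fact m * (((-x) gchoose j) * ((y + of_nat m - 1) gchoose (m-j)))"
      unfolding poch_gch[of x] binomial_fact[OF jm] p
      by (simp add: field_simps e)
  qed
  also have "\<dots> = fact m * ((-x + (y + of_nat m - 1)) gchoose m)"
    by (simp add: sum_distrib_left[symmetric] gbinomial_Vandermonde)
  also have "\<dots> = pochhammer (y-x) m" by (simp add: gbinomial_pochhammer' algebra_simps)
  finally show ?thesis .
qed

lemma bin2: "Suc (Suc n) * (Suc n * (n choose k)) = (Suc (Suc n) choose Suc (Suc k)) * (Suc (Suc k) * Suc k)"
proof -
  have "Suc n * (n choose k) = (Suc n choose Suc k) * Suc k" by (rule Suc_times_binomial_eq)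
  moreover have "Suc (Suc n) * (Suc n choose Suc k) = (Suc (Suc n) choose Suc (Suc k)) * Suc (Suc k)"
    by (rule Suc_times_binomial_eq)
  ultimately show ?thesis by (metis mult.assoc mult.commute)
qed

lemma bin2c: "of_nat (n choose k) * ((of_nat n + 1) * (of_nat n + 2)) =
   (of_nat (Suc (Suc n) choose Suc (Suc k)) :: complex) * ((of_nat k + 1) * (of_nat k + 2))"
proof -
  have "(of_nat (Suc (Suc n) * (Suc n * (n choose k))) :: complex) = of_nat ((Suc (Suc n) choose Suc (Suc k)) * (Suc (Suc k) * Suc k))"
    using bin2 by metis
  thus ?thesis by (simp add: algebra_simps)
qed

lemma poch2: "pochhammer (x::complex) (Suc (Suc k)) = x * (x+1) * pochhammer (x+2) k"
  by (simp add: pochhammer_rec algebra_simps)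

lemma jpoch: "of_nat j * pochhammer (x::complex) j = x * pochhammer (x+1) j - x * pochhammer x j"
proof -
  have "x * pochhammer (x+1) j = (x + of_nat j) * pochhammer x j"
    using pochhammer_rec[of x j] pochhammer_rec'[of x j] by simp
  thus ?thesis by (simp add: algebra_simps)
qed

lemma lin3: "(S::complex) = f0 + f1 + T \<Longrightarrow> T = L \<Longrightarrow> S = R \<Longrightarrow> L = R - f0 - f1"
  by simp

lemma sumA:
  fixes x a :: complex
  shows "(\<Sum>k=0..n. of_nat (Suc (Suc n) choose Suc (Suc k)) * (of_nat k + 1) * pochhammer x (Suc (Suc k)) * pochhammer a (n-k))
     = x * pochhammer (x+1+a) (Suc (Suc n)) - (x+1) * pochhammer (x+a) (Suc (Suc n)) + pochhammer a (Suc (Suc n))"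
proof -
  define m where "m = Suc (Suc n)"
  define f where "f j = of_nat (m choose j) * (of_nat j - 1) * pochhammer x j * pochhammer a (m-j)" for j
  have "(\<Sum>j=0..m. f j) = (\<Sum>j=0..m. of_nat (m choose j) * (of_nat j * pochhammer x j) * pochhammer a (m-j))
         - (\<Sum>j=0..m. of_nat (m choose j) * pochhammer x j * pochhammer a (m-j))"
    unfolding f_def sum_subtractf[symmetric] by (rule sum.cong) (auto simp: algebra_simps)
  also have "(\<Sum>j=0..m. of_nat (m choose j) * (of_nat j * pochhammer x j) * pochhammer a (m-j))
     = x * (\<Sum>j=0..m. of_nat (m choose j) * pochhammer (x+1) j * pochhammer a (m-j))
       - x * (\<Sum>j=0..m. of_nat (m choose j) * pochhammer x j * pochhammer a (m-j))"
    unfolding jpoch sum_distrib_left sum_subtractf[symmetric] by (rule sum.cong) (auto simp: algebra_simps)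
  finally have 1: "(\<Sum>j=0..m. f j) = x * pochhammer (x+1+a) m - (x+1) * pochhammer (x+a) m"
    unfolding vand1 by (simp add: algebra_simps)
  have 2: "(\<Sum>j=0..m. f j) = f 0 + f 1 + (\<Sum>k=0..n. f (Suc (Suc k)))"
    unfolding m_def sum.atLeast0_atMost_Suc_shift by simp
  have 3: "f 0 = - pochhammer a m" "f 1 = 0" unfolding f_def by simp_all
  have 4: "f (Suc (Suc k)) = of_nat (Suc (Suc n) choose Suc (Suc k)) * (of_nat k + 1) * pochhammer x (Suc (Suc k)) * pochhammer a (n-k)" for k
    unfolding f_def m_def by simp
  have 5: "(\<Sum>k=0..n. f (Suc (Suc k))) = (\<Sum>k=0..n. of_nat (Suc (Suc n) choose Suc (Suc k)) * (of_nat k + 1) * pochhammer x (Suc (Suc k)) * pochhammer a (n-k))"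
    using 4 by (intro sum.cong) auto
  show ?thesis using lin3[OF 2 5 1] unfolding 3 m_def by simp
qed

lemma sumB:
  fixes x c :: complex
  shows "(\<Sum>k=0..n. of_nat (Suc (Suc n) choose Suc (Suc k)) * (-1)^k * pochhammer x (Suc (Suc k)) * pochhammer (c + of_nat k) (n-k))
     = pochhammer (c-2-x) (Suc (Suc n)) - pochhammer (c-2) (Suc (Suc n)) + of_nat (Suc (Suc n)) * x * pochhammer (c-1) (Suc n)"
proof -
  define m where "m = Suc (Suc n)"
  define f where "f j = of_nat (m choose j) * (-1)^j * pochhammer x j * pochhammer (c - 2 + of_nat j) (m-j)" for j
  have 1: "(\<Sum>j=0..m. f j) = pochhammer (c-2-x) m" unfolding f_def by (rule vand2)
  have 2: "(\<Sum>j=0..m. f j) = f 0 + f 1 + (\<Sum>k=0..n. f (Suc (Suc k)))"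
    unfolding m_def sum.atLeast0_atMost_Suc_shift by simp
  have 3: "f 0 = pochhammer (c-2) m" "f 1 = - of_nat m * x * pochhammer (c-1) (Suc n)"
    unfolding f_def m_def by (simp_all add: algebra_simps)
  have 4: "f (Suc (Suc k)) = of_nat (Suc (Suc n) choose Suc (Suc k)) * (-1)^k * pochhammer x (Suc (Suc k)) * pochhammer (c + of_nat k) (n-k)" for k
    unfolding f_def m_def by (simp add: algebra_simps)
  have 5: "(\<Sum>k=0..n. f (Suc (Suc k))) = (\<Sum>k=0..n. of_nat (Suc (Suc n) choose Suc (Suc k)) * (-1)^k * pochhammer x (Suc (Suc k)) * pochhammer (c + of_nat k) (n-k))"
    using 4 by (intro sum.cong) auto
  have 6: "pochhammer (c-2-x) m - f 0 - f 1 = pochhammer (c-2-x) (Suc (Suc n)) - pochhammer (c-2) (Suc (Suc n)) + of_nat (Suc (Suc n)) * x * pochhammer (c-1) (Suc n)"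
    unfolding 3 m_def by (simp add: algebra_simps)
  show ?thesis using lin3[OF 2 5 1] unfolding 6 .
qed

lemma nz1: "(of_nat k + 1 :: complex) \<noteq> 0"
proof -
  have "(of_nat k + 1 :: complex) = of_nat (Suc k)" by simp
  thus ?thesis by (metis of_nat_eq_0_iff nat.distinct(1))
qed

lemma nz2: "(of_nat k + 2 :: complex) \<noteq> 0"
proof -
  have "(of_nat k + 2 :: complex) = of_nat (Suc (Suc k))" by simp
  thus ?thesis by (metis of_nat_eq_0_iff nat.distinct(1))
qed

lemma gA:
  fixes w0 w1 w2 w3 w4 w5 w6 w7 w8 w9 w10 w11 :: complex
  assumes "w0 = w1*w2*w3*w4" "w5*(w1*w2) = w6*(w7*w8)" "w8 \<noteq> 0" "w9 = w4*w3*w10"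
  shows "w0*(w5*w10*w11/w8) = w6*w7*w9*w11"
proof -
  have "w0*(w5*w10*w11/w8) = (w5*(w1*w2))*(w3*w4*w10*w11)/w8" using assms(1) by (simp add: mult_ac)
  also have "\<dots> = w6*w7*(w3*w4*w10*w11)" unfolding assms(2) using assms(3) by simp
  finally show ?thesis using assms(4) by (simp add: mult_ac)
qed

lemma gB:
  fixes w0 w1 w2 w3 w4 w5 w6 w7 w8 w9 w10 w12 w13 w14 w15 :: complex
  assumes "w0 = w1*w2*w3*w4" "w5*(w1*w2) = w6*(w7*w8)" "w8 \<noteq> 0" "w7 \<noteq> 0" "w13 \<noteq> 0" "w9 = w4*w3*w10" "w12 = w13*w14"
  shows "w0*w12*(w5*w15*w10/(w7*w8*w13)) = w6*w15*w9*w14"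
proof -
  have "w0*w12*(w5*w15*w10/(w7*w8*w13)) = (w5*(w1*w2))*(w3*w4*w15*w10*w14*w13)/(w7*w8*w13)" using assms(1,7) by (simp add: mult_ac)
  also have "\<dots> = w6*(w3*w4*w15*w10*w14)" unfolding assms(2) using assms(3,4,5) by simp
  finally show ?thesis using assms(6) by (simp add: mult_ac)
qed

lemma key:
  fixes s c :: complex
  assumes pc: "pochhammer c n \<noteq> 0" and s1: "s \<noteq> 1" and s2: "s \<noteq> 2"
  shows "(\<Sum>k=0..n. of_nat (n choose k) * pochhammer s k * pochhammer (c - s) (n-k) / (of_nat k + 2)) / pochhammer c n
      = (\<Sum>k=0..n. of_nat (n choose k) * (-1)^k * pochhammer s k / ((of_nat k + 1) * (of_nat k + 2) * pochhammer c k))"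
    (is "?SA / _ = ?SB")
proof -
  define D where "D = (of_nat n + 1) * (of_nat n + 2) * (s - 1) * (s - 2 :: complex)"
  define x where "x = s - 2"
  have xs: "x + 2 = s" unfolding x_def by simp
  have Dnz: "D \<noteq> 0" unfolding D_def using s1 s2 nz1[of n] nz2[of n] by simp
  have px: "pochhammer x (Suc (Suc k)) = (s - 2) * (s - 1) * pochhammer s k" for k
    unfolding poch2 xs by (simp add: x_def algebra_simps)
  have hA: "D * ?SA = (\<Sum>k=0..n. of_nat (Suc (Suc n) choose Suc (Suc k)) * (of_nat k + 1) * pochhammer x (Suc (Suc k)) * pochhammer (c - s) (n-k))"
    unfolding sum_distrib_left
    by (rule sum.cong[OF refl], rule gA[OF D_def bin2c nz2 px])
  have hB: "D * pochhammer c n * ?SB = (\<Sum>k=0..n. of_nat (Suc (Suc n) choose Suc (Suc k)) * (-1)^k * pochhammer x (Suc (Suc k)) * pochhammer (c + of_nat k) (n-k))"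
    unfolding sum_distrib_left
  proof (rule sum.cong[OF refl])
    fix k assume "k \<in> {0..n}"
    hence kn: "k \<le> n" by simp
    have pcn: "pochhammer c n = pochhammer c k * pochhammer (c + of_nat k) (n - k)"
      by (rule pochhammer_product[OF kn])
    have pck: "pochhammer c k \<noteq> 0" using pc pcn by auto
    show "D * pochhammer c n * (of_nat (n choose k) * (-1)^k * pochhammer s k / ((of_nat k + 1) * (of_nat k + 2) * pochhammer c k)) = of_nat (Suc (Suc n) choose Suc (Suc k)) * (-1)^k * pochhammer x (Suc (Suc k)) * pochhammer (c + of_nat k) (n-k)"
      by (rule gB[OF D_def bin2c nz2 nz1 pck px pcn])
  qed
  have e1: "x + 1 + (c - s) = c - 1" "x + (c - s) = c - 2" "c - 2 - x = c - s" unfolding x_def by simp_all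
  have "D * ?SA = x * pochhammer (c-1) (Suc (Suc n)) - (x+1) * pochhammer (c-2) (Suc (Suc n)) + pochhammer (c-s) (Suc (Suc n))"
    unfolding hA sumA e1 ..
  also have "\<dots> = pochhammer (c-s) (Suc (Suc n)) - pochhammer (c-2) (Suc (Suc n)) + of_nat (Suc (Suc n)) * x * pochhammer (c-1) (Suc n)"
  proof -
    have a: "pochhammer (c-1) (Suc (Suc n)) = pochhammer (c-1) (Suc n) * (c - 1 + of_nat (Suc n))"
      by (rule pochhammer_Suc)
    have b: "pochhammer (c-2) (Suc (Suc n)) = (c - 2) * pochhammer (c-1) (Suc n)"
      using pochhammer_rec[of "c-2" "Suc n"] by (simp add: algebra_simps)
    show ?thesis unfolding a b by (simp add: algebra_simps)
  qed
  also have "\<dots> = D * pochhammer c n * ?SB" unfolding hB sumB e1 ..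
  finally have "D * ?SA = D * (pochhammer c n * ?SB)" by (simp add: mult.assoc)
  hence "?SA = pochhammer c n * ?SB" using Dnz by simp
  thus ?thesis using pc by (simp add: field_simps)
qed

lemma npI: "(x::complex) \<in> \<int>\<^sub>\<le>\<^sub>0 \<longleftrightarrow> (\<exists>n. x = - of_nat n)"
  by (auto elim!: nonpos_Ints_cases')

lemma h1: "z \<notin> neg_ints \<Longrightarrow> z + of_nat m + 1 \<notin> \<int>\<^sub>\<le>\<^sub>0"
proof
  assume a: "z \<notin> neg_ints" "z + of_nat m + 1 \<in> \<int>\<^sub>\<le>\<^sub>0"
  then obtain j where eq: "z + of_nat m + 1 = - of_nat j" by (auto simp: npI)
  have "z = (z + of_nat m + 1) - of_nat m - 1" by simp
  also have "\<dots> = - of_nat j - of_nat m - 1" using eq by simp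
  also have "\<dots> = - of_nat (Suc (m + j))" by simp
  finally have "z = - of_nat (Suc (m + j))" .
  thus False using a(1) unfolding neg_ints_def by blast
qed

lemma h2: "z \<notin> neg_ints \<Longrightarrow> z \<noteq> 0 \<Longrightarrow> z + of_nat m \<notin> \<int>\<^sub>\<le>\<^sub>0"
proof
  assume a: "z \<notin> neg_ints" "z \<noteq> 0" "z + of_nat m \<in> \<int>\<^sub>\<le>\<^sub>0"
  then obtain j where j: "z + of_nat m = - of_nat j" by (auto simp: npI)
  show False
  proof (cases "m + j")
    case 0 thus False using j a(2) by simp
  next
    case (Suc i)
    have "z = (z + of_nat m) - of_nat m" by simp
    also have "\<dots> = - of_nat j - of_nat m" using j by simp
    also have "\<dots> = - of_nat (m + j)" by simp
    finally have "z = - of_nat (Suc i)" using Suc by simp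
    thus False using a(1) unfolding neg_ints_def by blast
  qed
qed

lemma cb_inv: "1 / (z * cbinom M z) = Gamma (z+1) * Gamma (M - z + 1) / (z * Gamma (M + 1))"
  unfolding cbinom_def by (simp add: field_simps)

lemma deriv_term:
  fixes M z :: complex
  assumes z: "z \<notin> \<int>\<^sub>\<le>\<^sub>0" and mz: "M - z + 1 \<notin> \<int>\<^sub>\<le>\<^sub>0" and m: "M + 1 \<notin> \<int>\<^sub>\<le>\<^sub>0"
  shows "((\<lambda>z. 1 / (z * cbinom M z)) has_field_derivative
           ((Hc z - Hc (M - z)) / (z * cbinom M z) - 1 / (z^2 * cbinom M z))) (at z)"
proof -
  have z0: "z \<noteq> 0" using z by auto
  have z1: "z + 1 \<notin> \<int>\<^sub>\<le>\<^sub>0" using z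
    using plus_one_in_nonpos_Ints_imp by blast
  have g1: "Gamma (z+1) \<noteq> 0" using z1 by (simp add: Gamma_eq_zero_iff)
  have g2: "Gamma (M - z + 1) \<noteq> 0" using mz by (simp add: Gamma_eq_zero_iff)
  have g3: "Gamma (M + 1) \<noteq> 0" using m by (simp add: Gamma_eq_zero_iff)
  have d1: "((\<lambda>z. Gamma (z+1)) has_field_derivative Gamma (z+1) * Digamma (z+1) * 1) (at z)"
    by (rule DERIV_chain2[where f=Gamma and g="\<lambda>z. z+1" and x=z, OF has_field_derivative_Gamma[OF z1]]) (auto intro!: derivative_eq_intros)
  have d2: "((\<lambda>z. Gamma (M - z + 1)) has_field_derivative Gamma (M - z + 1) * Digamma (M - z + 1) * (-1)) (at z)"
    by (rule DERIV_chain2[where f=Gamma and g="\<lambda>z. M - z + 1" and x=z, OF has_field_derivative_Gamma[OF mz]]) (auto intro!: derivative_eq_intros)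
  have d3: "((\<lambda>z. z * Gamma (M + 1)) has_field_derivative 1 * Gamma (M + 1)) (at z)"
    by (auto intro!: derivative_eq_intros)
  have nz: "z * Gamma (M + 1) \<noteq> 0" using z0 g3 by simp
  note d = DERIV_divide[OF DERIV_mult[OF d1 d2] d3 nz]
  have fe: "(\<lambda>z. 1 / (z * cbinom M z)) = (\<lambda>z. Gamma (z+1) * Gamma (M - z + 1) / (z * Gamma (M + 1)))"
    by (rule ext) (rule cb_inv)
  show ?thesis unfolding fe
    by (rule DERIV_cong[OF d]) (use z0 g1 g2 g3 in \<open>simp add: Hc_def cbinom_def field_simps power2_eq_square\<close>)
qed

lemma h3: "(x::complex) \<notin> \<int>\<^sub>\<le>\<^sub>0 \<Longrightarrow> x + of_nat k \<notin> \<int>\<^sub>\<le>\<^sub>0"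
proof
  assume a: "x \<notin> \<int>\<^sub>\<le>\<^sub>0" "x + of_nat k \<in> \<int>\<^sub>\<le>\<^sub>0"
  then obtain j where j: "x + of_nat k = - of_nat j" by (auto simp: npI)
  have "x = (x + of_nat k) - of_nat k" by simp
  also have "\<dots> = - of_nat (j + k)" using j by simp
  finally have "x = - of_nat (j + k)" .
  thus False using a(1) minus_of_nat_in_nonpos_Ints by metis
qed

lemma poch_nz: "(x::complex) \<notin> \<int>\<^sub>\<le>\<^sub>0 \<Longrightarrow> pochhammer x m \<noteq> 0"
  by (auto simp: pochhammer_eq_0_iff)

lemma Gamma_shift: "(x::complex) \<notin> \<int>\<^sub>\<le>\<^sub>0 \<Longrightarrow> Gamma (x + of_nat m) = pochhammer x m * Gamma x"
  using pochhammer_Gamma[of x m] Gamma_nonzero[of x] by (simp add: field_simps)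

lemma fval:
  fixes r s :: complex and m k :: nat
  assumes km: "k \<le> m" and s: "s \<notin> \<int>\<^sub>\<le>\<^sub>0" and rs: "r - s + 1 \<notin> \<int>\<^sub>\<le>\<^sub>0" and r: "r + 1 \<notin> \<int>\<^sub>\<le>\<^sub>0"
  shows "1 / ((of_nat k + s) * cbinom (of_nat m + r) (of_nat k + s)) =
         Gamma (s+1) * Gamma (r-s+1) / Gamma (r+1) * (pochhammer s k * pochhammer (r-s+1) (m-k)) / (s * pochhammer (r+1) m)"
proof -
  have s0: "s \<noteq> 0" using s by auto
  have sk: "s + of_nat k \<notin> \<int>\<^sub>\<le>\<^sub>0" using h3[OF s] .
  have sk0: "of_nat k + s \<noteq> 0" using sk by (auto simp: add.commute)
  have e1: "Gamma (of_nat k + s + 1) = (of_nat k + s) * (pochhammer s k * Gamma s)"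
    using Gamma_plus1[OF sk] Gamma_shift[OF s, of k] by (simp add: add.commute)
  have e1': "Gamma (s + 1) = s * Gamma s" using Gamma_plus1[OF s] .
  have e2: "Gamma (of_nat m + r - (of_nat k + s) + 1) = pochhammer (r-s+1) (m-k) * Gamma (r-s+1)"
  proof -
    have eq: "of_nat m + r - (of_nat k + s) + 1 = (r - s + 1) + of_nat (m-k)" using km by (simp add: of_nat_diff)
    show ?thesis unfolding eq by (rule Gamma_shift[OF rs])
  qed
  have e3: "Gamma (of_nat m + r + 1) = pochhammer (r+1) m * Gamma (r+1)"
    using Gamma_shift[OF r, of m] by (simp add: algebra_simps)
  have g: "Gamma (r+1) \<noteq> 0" "pochhammer (r+1) m \<noteq> 0" "Gamma s \<noteq> 0"
    using r s by (simp_all add: Gamma_nonzero poch_nz)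
  have "1 / ((of_nat k + s) * cbinom (of_nat m + r) (of_nat k + s))
     = (of_nat k + s) * (pochhammer s k * Gamma s * (pochhammer (r-s+1) (m-k) * Gamma (r-s+1))) / ((of_nat k + s) * (pochhammer (r+1) m * Gamma (r+1)))"
    unfolding cb_inv e1 e2 e3 by (simp add: mult_ac)
  also have "\<dots> = pochhammer s k * Gamma s * (pochhammer (r-s+1) (m-k) * Gamma (r-s+1)) / (pochhammer (r+1) m * Gamma (r+1))"
    using sk0 by (rule mult_divide_mult_cancel_left)
  also have "\<dots> = Gamma (s+1) * Gamma (r-s+1) / Gamma (r+1) * (pochhammer s k * pochhammer (r-s+1) (m-k)) / (s * pochhammer (r+1) m)"
    unfolding e1' using s0 g by (simp add: field_simps)
  finally show ?thesis .
qed

lemma deriv_eq_ev: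
  fixes F G :: "complex \<Rightarrow> complex"
  assumes dF: "(F has_field_derivative a) (at x)" and dG: "(G has_field_derivative b) (at x)"
    and ev: "eventually (\<lambda>t. F t = G t) (at x)"
  shows "a = b"
proof -
  have cF: "(F \<longlongrightarrow> F x) (at x)" using DERIV_isCont[OF dF] by (simp add: isCont_def)
  have cG: "(G \<longlongrightarrow> G x) (at x)" using DERIV_isCont[OF dG] by (simp add: isCont_def)
  have "(F \<longlongrightarrow> G x) (at x)" using cG tendsto_cong[OF ev] by simp
  hence Fx: "F x = G x" using cF tendsto_unique[of "at x"] by simp
  have "eventually (\<lambda>t. F t = G t) (nhds x)" using ev Fx eventually_nhds_conv_at by blast
  hence "(G has_field_derivative a) (at x)" using DERIV_cong_ev[OF refl _ refl] dF by blast
  thus ?thesis using dG DERIV_unique by blast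
qed

lemma dterm:
  fixes M s cc :: complex
  assumes a1: "of_nat k + s \<notin> \<int>\<^sub>\<le>\<^sub>0" and a2: "M - (of_nat k + s) + 1 \<notin> \<int>\<^sub>\<le>\<^sub>0" and a3: "M + 1 \<notin> \<int>\<^sub>\<le>\<^sub>0"
  shows "((\<lambda>s. cc * (1 / ((of_nat k + s) * cbinom M (of_nat k + s)))) has_field_derivative
     cc * ((Hc (of_nat k + s) - Hc (M - (of_nat k + s))) / ((of_nat k + s) * cbinom M (of_nat k + s)) - 1 / ((of_nat k + s)^2 * cbinom M (of_nat k + s)))) (at s)"
proof -
  have "((\<lambda>s. 1 / ((of_nat k + s) * cbinom M (of_nat k + s))) has_field_derivative
     ((Hc (of_nat k + s) - Hc (M - (of_nat k + s))) / ((of_nat k + s) * cbinom M (of_nat k + s)) - 1 / ((of_nat k + s)^2 * cbinom M (of_nat k + s))) * 1) (at s)"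
    by (rule DERIV_chain2[where f="\<lambda>z. 1 / (z * cbinom M z)" and g="\<lambda>s. of_nat k + s" and x=s, OF deriv_term[OF a1 a2 a3]])
       (auto intro!: derivative_eq_intros)
  thus ?thesis using DERIV_cmult by fastforce
qed

lemma alg1: "(cc::complex) / kk * (x / (z * b) - 1 / (z^2 * b)) = cc * x / (kk * z * b) - cc / (kk * z^2 * b)"
  by (simp add: divide_inverse algebra_simps)

lemma alg2: "(cc::complex) * e / (k1 * kk) * (x / (z * b) - 1 / (z^2 * b)) = cc * e * x / (k1 * kk * z * b) - cc * e / (k1 * kk * z^2 * b)"
  by (simp add: divide_inverse algebra_simps)

lemma alg3: "(cc::complex) / kk * (K * (P * Q) / (t * Pn)) = K / t * (cc * P * Q / kk / Pn)"
  by (simp add: divide_inverse algebra_simps)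

lemma alg4: "(cc::complex) * e / (k1 * kk) * (K * (P * 1) / (t * Pk)) = K / t * (cc * e * P / (k1 * kk * Pk))"
  by (simp add: divide_inverse algebra_simps)

theorem theorem24:
  fixes n :: nat and r s :: complex
  assumes "r \<notin> neg_ints" and "s \<notin> neg_ints" and "s \<noteq> 0" and "r - s \<notin> neg_ints"
  shows "(\<Sum>k=0..n. of_nat (n choose k) * (Hc (of_nat k + s) - Hc (of_nat n - of_nat k + r - s))
            / ((of_nat k + 2) * (of_nat k + s) * cbinom (of_nat n + r) (of_nat k + s)))
       - (\<Sum>k=0..n. of_nat (n choose k)
            / ((of_nat k + 2) * (of_nat k + s)^2 * cbinom (of_nat n + r) (of_nat k + s)))
       = (\<Sum>k=0..n. of_nat (n choose k) * (-1)^k * (Hc (of_nat k + s) - Hc (r - s))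
            / ((of_nat k + 1) * (of_nat k + 2) * (of_nat k + s) * cbinom (of_nat k + r) (of_nat k + s)))
       - (\<Sum>k=0..n. of_nat (n choose k) * (-1)^k
            / ((of_nat k + 1) * (of_nat k + 2) * (of_nat k + s)^2 * cbinom (of_nat k + r) (of_nat k + s)))"
proof -
  have sZ: "s \<notin> \<int>\<^sub>\<le>\<^sub>0" using h2[OF assms(2,3), of 0] by simp
  have rZ: "r + 1 \<notin> \<int>\<^sub>\<le>\<^sub>0" using h1[OF assms(1), of 0] by simp
  have rsZ: "r - s + 1 \<notin> \<int>\<^sub>\<le>\<^sub>0" using h1[OF assms(4), of 0] by simp
  define F where "F t = (\<Sum>k=0..n. of_nat (n choose k) / (of_nat k + 2) * (1 / ((of_nat k + t) * cbinom (of_nat n + r) (of_nat k + t))))" for t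
  define G where "G t = (\<Sum>k=0..n. of_nat (n choose k) * (-1)^k / ((of_nat k + 1) * (of_nat k + 2)) * (1 / ((of_nat k + t) * cbinom (of_nat k + r) (of_nat k + t))))" for t
  define F' where "F' = (\<Sum>k=0..n. of_nat (n choose k) / (of_nat k + 2) * ((Hc (of_nat k + s) - Hc (of_nat n + r - (of_nat k + s))) / ((of_nat k + s) * cbinom (of_nat n + r) (of_nat k + s)) - 1 / ((of_nat k + s)^2 * cbinom (of_nat n + r) (of_nat k + s))))"
  define G' where "G' = (\<Sum>k=0..n. of_nat (n choose k) * (-1)^k / ((of_nat k + 1) * (of_nat k + 2)) * ((Hc (of_nat k + s) - Hc (of_nat k + r - (of_nat k + s))) / ((of_nat k + s) * cbinom (of_nat k + r) (of_nat k + s)) - 1 / ((of_nat k + s)^2 * cbinom (of_nat k + r) (of_nat k + s))))"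
  have dF: "(F has_field_derivative F') (at s)"
    unfolding F_def[abs_def] F'_def
  proof (rule DERIV_sum)
    fix k assume "k \<in> {0..n}"
    hence kn: "k \<le> n" by simp
    have a1: "of_nat k + s \<notin> \<int>\<^sub>\<le>\<^sub>0" using h3[OF sZ, of k] by (simp add: add.commute)
    have e: "of_nat n + r - (of_nat k + s) + 1 = (r - s + 1) + of_nat (n - k)" using kn by (simp add: of_nat_diff)
    have a2: "of_nat n + r - (of_nat k + s) + 1 \<notin> \<int>\<^sub>\<le>\<^sub>0" unfolding e by (rule h3[OF rsZ])
    have a3: "of_nat n + r + 1 \<notin> \<int>\<^sub>\<le>\<^sub>0" using h3[OF rZ, of n] by (simp add: algebra_simps)
    show "((\<lambda>x. of_nat (n choose k) / (of_nat k + 2) * (1 / ((of_nat k + x) * cbinom (of_nat n + r) (of_nat k + x)))) has_field_derivative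
      of_nat (n choose k) / (of_nat k + 2) * ((Hc (of_nat k + s) - Hc (of_nat n + r - (of_nat k + s))) / ((of_nat k + s) * cbinom (of_nat n + r) (of_nat k + s)) - 1 / ((of_nat k + s)^2 * cbinom (of_nat n + r) (of_nat k + s)))) (at s)"
      by (rule dterm[OF a1 a2 a3])
  qed
  have dG: "(G has_field_derivative G') (at s)"
    unfolding G_def[abs_def] G'_def
  proof (rule DERIV_sum)
    fix k assume "k \<in> {0..n}"
    have a1: "of_nat k + s \<notin> \<int>\<^sub>\<le>\<^sub>0" using h3[OF sZ, of k] by (simp add: add.commute)
    have e: "of_nat k + r - (of_nat k + s) + 1 = r - s + 1" by simp
    have a2: "of_nat k + r - (of_nat k + s) + 1 \<notin> \<int>\<^sub>\<le>\<^sub>0" unfolding e by (rule rsZ)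
    have a3: "of_nat k + r + 1 \<notin> \<int>\<^sub>\<le>\<^sub>0" using h3[OF rZ, of k] by (simp add: algebra_simps)
    show "((\<lambda>x. of_nat (n choose k) * (-1)^k / ((of_nat k + 1) * (of_nat k + 2)) * (1 / ((of_nat k + x) * cbinom (of_nat k + r) (of_nat k + x)))) has_field_derivative
      of_nat (n choose k) * (-1)^k / ((of_nat k + 1) * (of_nat k + 2)) * ((Hc (of_nat k + s) - Hc (of_nat k + r - (of_nat k + s))) / ((of_nat k + s) * cbinom (of_nat k + r) (of_nat k + s)) - 1 / ((of_nat k + s)^2 * cbinom (of_nat k + r) (of_nat k + s)))) (at s)"
      by (rule dterm[OF a1 a2 a3])
  qed
  have FG: "F t = G t" if t1: "t \<notin> \<int>\<^sub>\<le>\<^sub>0" and t2: "r - t + 1 \<notin> \<int>\<^sub>\<le>\<^sub>0" and t3: "t \<noteq> 1" and t4: "t \<noteq> 2" for t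
  proof -
    define K where "K = Gamma (t+1) * Gamma (r-t+1) / Gamma (r+1)"
    have "F t = (\<Sum>k=0..n. K / t * (of_nat (n choose k) * pochhammer t k * pochhammer (r-t+1) (n-k) / (of_nat k + 2) / pochhammer (r+1) n))"
      unfolding F_def K_def by (rule sum.cong[OF refl]) (simp only: fval[OF _ t1 t2 rZ] atLeastAtMost_iff alg3)
    also have "\<dots> = K / t * ((\<Sum>k=0..n. of_nat (n choose k) * pochhammer t k * pochhammer (r+1-t) (n-k) / (of_nat k + 2)) / pochhammer (r+1) n)"
      by (simp add: sum_distrib_left sum_divide_distrib algebra_simps)
    also have "\<dots> = K / t * (\<Sum>k=0..n. of_nat (n choose k) * (-1)^k * pochhammer t k / ((of_nat k + 1) * (of_nat k + 2) * pochhammer (r+1) k))"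
      by (subst key[OF poch_nz[OF rZ] t3 t4]) (rule refl)
    also have "\<dots> = G t"
      unfolding G_def K_def sum_distrib_left
      by (rule sum.cong[OF refl]) (simp only: fval[OF _ t1 t2 rZ] atLeastAtMost_iff order_refl diff_self_eq_0 alg4 pochhammer_0)
    finally show ?thesis .
  qed
  have ev: "eventually (\<lambda>t. F t = G t) (at s)"
  proof -
    have l1: "((\<lambda>t. t) \<longlongrightarrow> s) (at s)" by (rule tendsto_ident_at)
    have l2: "((\<lambda>t. r - t + 1) \<longlongrightarrow> r - s + 1) (at s)" by (intro tendsto_intros)
    have o: "open (- \<int>\<^sub>\<le>\<^sub>0 :: complex set)" by (simp add: open_Compl)
    have e1: "eventually (\<lambda>t. t \<in> - \<int>\<^sub>\<le>\<^sub>0) (at s)" using topological_tendstoD[OF l1 o] sZ by simp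
    have e2: "eventually (\<lambda>t. r - t + 1 \<in> - \<int>\<^sub>\<le>\<^sub>0) (at s)" using topological_tendstoD[OF l2 o] rsZ by simp
    have e3: "eventually (\<lambda>t. t \<noteq> 1) (at s)" by (rule eventually_neq_at_within)
    have e4: "eventually (\<lambda>t. t \<noteq> 2) (at s)" by (rule eventually_neq_at_within)
    show ?thesis using e1 e2 e3 e4 by eventually_elim (use FG in auto)
  qed
  have "F' = G'" by (rule deriv_eq_ev[OF dF dG ev])
  moreover have "F' = (\<Sum>k=0..n. of_nat (n choose k) * (Hc (of_nat k + s) - Hc (of_nat n - of_nat k + r - s))
            / ((of_nat k + 2) * (of_nat k + s) * cbinom (of_nat n + r) (of_nat k + s)))
       - (\<Sum>k=0..n. of_nat (n choose k)
            / ((of_nat k + 2) * (of_nat k + s)^2 * cbinom (of_nat n + r) (of_nat k + s)))"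
  proof -
    have ea: "of_nat n + r - (of_nat k + s) = of_nat n - of_nat k + r - s" for k :: nat by simp
    show ?thesis unfolding F'_def sum_subtractf[symmetric] by (rule sum.cong[OF refl]) (simp only: alg1 ea)
  qed
  moreover have "G' = (\<Sum>k=0..n. of_nat (n choose k) * (-1)^k * (Hc (of_nat k + s) - Hc (r - s))
            / ((of_nat k + 1) * (of_nat k + 2) * (of_nat k + s) * cbinom (of_nat k + r) (of_nat k + s)))
       - (\<Sum>k=0..n. of_nat (n choose k) * (-1)^k
            / ((of_nat k + 1) * (of_nat k + 2) * (of_nat k + s)^2 * cbinom (of_nat k + r) (of_nat k + s)))"
  proof -
    have ea: "of_nat k + r - (of_nat k + s) = r - s" for k :: nat by simp
    show ?thesis unfolding G'_def sum_subtractf[symmetric] by (rule sum.cong[OF refl]) (simp only: alg2 ea)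
  qed
  ultimately show ?thesis by simp
qed

end
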